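(* If $\rho_1$ and $\rho_2$ are radius functions on $\mathbb{R}^d$, then $\rho_1\vee\rho_2:=\max\{\rho_1,\rho_2\}$ is a radius function.
   Context: A radius function is a Borel function $\rho:\mathbb{R}^d\to(0,\infty)$ for which there is a constant $C<\infty$ such that $C^{-1}\rho(x)\le\rho(y)\le C\rho(x)$ for all $x\in\mathbb{R}^d$ and all $y\in B(x,\rho(x))$ (Euclidean open ball). *)

theory Defs
  imports "HOL-Analysis.Analysis"
begin

definition radius_function :: "('a::euclidean_space \<Rightarrow> real) \<Rightarrow> bool" where
  "radius_function \<rho> \<longleftrightarrow>
     \<rho> \<in> borel_measurable borel \<and>
     (\<forall>x. 0 < \<rho> x) \<and>
     (\<exists>C::real. 0 < C \<and>
        (\<forall>x. \<forall>y\<in>ball x (\<rho> x). \<rho> x / C \<le> \<rho> y \<and> \<rho> y \<le> C * \<rho> x))"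

end

theory Submission
  imports Defs
begin

lemma rf_obtain:
  assumes "radius_function \<rho>"
  obtains C where "C \<ge> 1" "\<And>x. 0 < \<rho> x"
    "\<And>x y. dist x y < \<rho> x \<Longrightarrow> \<rho> x / C \<le> \<rho> y \<and> \<rho> y \<le> C * \<rho> x"
proof -
  from assms obtain C where C: "0 < C" "\<forall>x. \<forall>y\<in>ball x (\<rho> x). \<rho> x / C \<le> \<rho> y \<and> \<rho> y \<le> C * \<rho> x"
    and p: "\<And>x. 0 < \<rho> x" unfolding radius_function_def by blast
  have b: "\<And>x y. dist x y < \<rho> x \<Longrightarrow> \<rho> x / C \<le> \<rho> y \<and> \<rho> y \<le> C * \<rho> x"
    using C(2) by auto
  obtain x0 :: 'a where True by blast
  have "\<rho> x0 \<le> C * \<rho> x0" using b[of x0 x0] p[of x0] by simp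
  then have "C \<ge> 1" using p[of x0] by (simp add: mult_le_cancel_right1)
  then show ?thesis using that p b by blast
qed

lemma rf_up:
  assumes C1: "C \<ge> 1" and b: "\<And>x y. dist x y < \<rho> x \<Longrightarrow> \<rho> x / C \<le> \<rho> y \<and> \<rho> y \<le> C * \<rho> x"
    and d: "dist x y < a" and le: "\<rho> x \<le> a"
  shows "\<rho> y \<le> C * a"
proof (rule ccontr)
  assume "\<not> \<rho> y \<le> C * a"
  hence h: "\<rho> y > C * a" by simp
  have "a > 0" using d zero_le_dist[of x y] by linarith
  hence "C * a \<ge> a" using C1 by simp
  hence "dist y x < \<rho> y" using h d by (simp add: dist_commute)
  hence "\<rho> y / C \<le> \<rho> x" using b[of y x] by simp
  moreover have "\<rho> y / C > a" using h C1 by (simp add: field_simps)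
  ultimately show False using le by simp
qed

theorem mainTheorem7:
  fixes \<rho>1 \<rho>2 :: "'a::euclidean_space \<Rightarrow> real"
  assumes "radius_function \<rho>1" and "radius_function \<rho>2"
  shows "radius_function (\<lambda>x. max (\<rho>1 x) (\<rho>2 x))"
proof -
  obtain C1 where c1: "C1 \<ge> 1" "\<And>x. 0 < \<rho>1 x"
    "\<And>x y. dist x y < \<rho>1 x \<Longrightarrow> \<rho>1 x / C1 \<le> \<rho>1 y \<and> \<rho>1 y \<le> C1 * \<rho>1 x"
    using rf_obtain[OF assms(1)] by blast
  obtain C2 where c2: "C2 \<ge> 1" "\<And>x. 0 < \<rho>2 x"
    "\<And>x y. dist x y < \<rho>2 x \<Longrightarrow> \<rho>2 x / C2 \<le> \<rho>2 y \<and> \<rho>2 y \<le> C2 * \<rho>2 x"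
    using rf_obtain[OF assms(2)] by blast
  define C where "C = max C1 C2"
  have m: "(\<lambda>x. max (\<rho>1 x) (\<rho>2 x)) \<in> borel_measurable borel"
    using assms unfolding radius_function_def by (intro borel_measurable_max) auto
  have key: "max (\<rho>1 x) (\<rho>2 x) / C \<le> max (\<rho>1 y) (\<rho>2 y) \<and>
             max (\<rho>1 y) (\<rho>2 y) \<le> C * max (\<rho>1 x) (\<rho>2 x)"
    if d: "dist x y < max (\<rho>1 x) (\<rho>2 x)" for x y
  proof (cases "\<rho>2 x \<le> \<rho>1 x")
    case True
    hence d1: "dist x y < \<rho>1 x" using d by simp
    have a: "\<rho>1 x / C1 \<le> \<rho>1 y" "\<rho>1 y \<le> C1 * \<rho>1 x" using c1(3)[OF d1] by auto
    have b: "\<rho>2 y \<le> C2 * \<rho>1 x" using rf_up[where \<rho>=\<rho>2, OF c2(1) c2(3) d1 True] .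
    have p: "\<rho>1 x > 0" by (rule c1(2))
    have "\<rho>1 x / C \<le> \<rho>1 x / C1" using p c1(1) unfolding C_def
      by (intro divide_left_mono) auto
    moreover have "C1 * \<rho>1 x \<le> C * \<rho>1 x" "C2 * \<rho>1 x \<le> C * \<rho>1 x"
      using p unfolding C_def by (auto intro: mult_right_mono)
    ultimately show ?thesis using a b True by auto
  next
    case False
    hence d1: "dist x y < \<rho>2 x" using d by simp
    have F: "\<rho>1 x \<le> \<rho>2 x" using False by simp
    have a: "\<rho>2 x / C2 \<le> \<rho>2 y" "\<rho>2 y \<le> C2 * \<rho>2 x" using c2(3)[OF d1] by auto
    have b: "\<rho>1 y \<le> C1 * \<rho>2 x" using rf_up[where \<rho>=\<rho>1, OF c1(1) c1(3) d1 F] .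
    have p: "\<rho>2 x > 0" by (rule c2(2))
    have "\<rho>2 x / C \<le> \<rho>2 x / C2" using p c2(1) unfolding C_def
      by (intro divide_left_mono) auto
    moreover have "C1 * \<rho>2 x \<le> C * \<rho>2 x" "C2 * \<rho>2 x \<le> C * \<rho>2 x"
      using p unfolding C_def by (auto intro: mult_right_mono)
    ultimately show ?thesis using a b F by auto
  qed
  have "C > 0" using c1(1) unfolding C_def by simp
  then show ?thesis unfolding radius_function_def
    using m key c1(2) by (auto intro!: exI[of _ C] simp: less_max_iff_disj)
qed

end
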